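(* Let $G=(V,E)$ be a directed graph with $n=|V|$, $h>0$ a length bound, $1\le\alpha\le\log n$, and $u,v,w\in V$. Then: (1) $\sum_{a\in V}w_h^\alpha(u,a)\le n$; (2) $\sum_{a\in V}w_h^\alpha(u,a)\ge1$; (3) $w_h^\alpha(u,v)\ge 2^{-\alpha\overline{\mathrm{dist}}(u,v)/h}-1/n^2$; (4) $2^{-\alpha\overline{\mathrm{dist}}(w,v)/h}\cdot w_h^\alpha(u,v)-1/n^2\le w_h^\alpha(u,w)\le 2^{\alpha\overline{\mathrm{dist}}(w,v)/h}\cdot\left(w_h^\alpha(u,v)+1/n^2\right)$.
   Context: $G$ has positive integer edge lengths; $\mathrm{dist}(u,v)$ is the directed shortest-path distance ($\infty$ if unreachable) and $\overline{\mathrm{dist}}(u,v)=\mathrm{dist}(u,v)+\mathrm{dist}(v,u)$ (round-trip distance). The $h$-length $\alpha$-exponential distance weight is $w_h^\alpha(u,v)=1$ if $u=v$; $w_h^\alpha(u,v)=2^{-\alpha\overline{\mathrm{dist}}(u,v)/h}$ if $u\ne v$ and $\overline{\mathrm{dist}}(u,v)\le\frac{2h\log_2n}{\alpha}$; and $w_h^\alpha(u,v)=0$ otherwise. *)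

theory Defs
  imports Complex_Main "HOL-Library.Extended_Real"
begin

definition is_walk :: "('a \<times> 'a) set \<Rightarrow> 'a list \<Rightarrow> 'a \<Rightarrow> 'a \<Rightarrow> bool" where
  "is_walk E p u v \<longleftrightarrow> p \<noteq> [] \<and> hd p = u \<and> last p = v \<and> set (zip p (tl p)) \<subseteq> E"

definition walk_len :: "('a \<times> 'a \<Rightarrow> nat) \<Rightarrow> 'a list \<Rightarrow> nat" where
  "walk_len len p = sum_list (map len (zip p (tl p)))"

text \<open>Directed shortest-path distance; \<infinity> if unreachable (Inf of the empty set).\<close>
definition gdist :: "('a \<times> 'a) set \<Rightarrow> ('a \<times> 'a \<Rightarrow> nat) \<Rightarrow> 'a \<Rightarrow> 'a \<Rightarrow> enat" where
  "gdist E len u v = Inf {enat (walk_len len p) | p. is_walk E p u v}"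

definition rtdist :: "('a \<times> 'a) set \<Rightarrow> ('a \<times> 'a \<Rightarrow> nat) \<Rightarrow> 'a \<Rightarrow> 'a \<Rightarrow> enat" where
  "rtdist E len u v = gdist E len u v + gdist E len v u"

definition expdecay :: "real \<Rightarrow> real \<Rightarrow> enat \<Rightarrow> real" where
  "expdecay h \<alpha> d = (case d of enat k \<Rightarrow> 2 powr (- \<alpha> * real k / h) | \<infinity> \<Rightarrow> 0)"

definition expgrowth :: "real \<Rightarrow> real \<Rightarrow> enat \<Rightarrow> ereal" where
  "expgrowth h \<alpha> d = (case d of enat k \<Rightarrow> ereal (2 powr (\<alpha> * real k / h)) | \<infinity> \<Rightarrow> \<infinity>)"

definition expweight :: "'a set \<Rightarrow> ('a \<times> 'a) set \<Rightarrow> ('a \<times> 'a \<Rightarrow> nat) \<Rightarrow> real \<Rightarrow> real \<Rightarrow> 'a \<Rightarrow> 'a \<Rightarrow> real" where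
  "expweight V E len h \<alpha> u v =
     (if u = v then 1
      else (case rtdist E len u v of
              enat d \<Rightarrow> (if real d \<le> 2 * h * log 2 (real (card V)) / \<alpha>
                         then 2 powr (- \<alpha> * real d / h) else 0)
            | \<infinity> \<Rightarrow> 0))"

end

theory Submission
  imports Defs
begin

lemma walk_append:
  assumes "p \<noteq> []" "q \<noteq> []" "last p = hd q"
  shows "zip (p @ tl q) (tl (p @ tl q)) = zip p (tl p) @ zip q (tl q)"
  using assms
proof (induction p rule: induct_list012)
  case 1 then show ?case by simp
next
  case (2 x) then show ?case by (cases q) auto
next
  case (3 x y r) then show ?case by auto
qed

lemma Inf_enat_in: "(S::enat set) \<noteq> {} \<Longrightarrow> Inf S \<in> S"
  by (simp add: Inf_enat_def) (meson LeastI_ex ex_in_conv)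

lemma gdist_le: "is_walk E p u v \<Longrightarrow> gdist E len u v \<le> enat (walk_len len p)"
  unfolding gdist_def by (rule Inf_lower) blast

lemma gdist_self: "gdist E len u u = 0"
proof -
  have "is_walk E [u] u u" by (simp add: is_walk_def)
  from gdist_le[OF this, of len] show ?thesis by (simp add: walk_len_def zero_enat_def[symmetric])
qed

lemma gdist_fin:
  assumes "gdist E len u v \<noteq> \<infinity>"
  shows "\<exists>p. is_walk E p u v \<and> gdist E len u v = enat (walk_len len p)"
proof -
  let ?S = "{enat (walk_len len p) | p. is_walk E p u v}"
  have "?S \<noteq> {}"
  proof
    assume "?S = {}" then show False using assms by (simp add: gdist_def top_enat_def)
  qed
  from Inf_enat_in[OF this] show ?thesis unfolding gdist_def by auto
qed

lemma gdist_tri: "gdist E len u w \<le> gdist E len u v + gdist E len v w"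
proof (cases "gdist E len u v = \<infinity> \<or> gdist E len v w = \<infinity>")
  case True then show ?thesis by auto
next
  case False
  then obtain p q where p: "is_walk E p u v" "gdist E len u v = enat (walk_len len p)"
    and q: "is_walk E q v w" "gdist E len v w = enat (walk_len len q)"
    using gdist_fin by metis
  have ne: "p \<noteq> []" "q \<noteq> []" "last p = hd q" using p(1) q(1) by (auto simp: is_walk_def)
  have z: "zip (p @ tl q) (tl (p @ tl q)) = zip p (tl p) @ zip q (tl q)"
    by (rule walk_append[OF ne])
  have "is_walk E (p @ tl q) u w"
    using p(1) q(1) ne z unfolding is_walk_def
    by (cases q) auto
  hence "gdist E len u w \<le> enat (walk_len len (p @ tl q))" by (rule gdist_le)
  also have "walk_len len (p @ tl q) = walk_len len p + walk_len len q"
    unfolding walk_len_def z by simp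
  finally show ?thesis using p(2) q(2) by simp
qed

lemma rtdist_sym: "rtdist E len u v = rtdist E len v u"
  by (simp add: rtdist_def add.commute)

lemma rtdist_tri: "rtdist E len u w \<le> rtdist E len u v + rtdist E len v w"
proof -
  have "rtdist E len u w \<le> (gdist E len u v + gdist E len v w) + (gdist E len w v + gdist E len v u)"
    unfolding rtdist_def by (intro add_mono gdist_tri)
  also have "\<dots> = rtdist E len u v + rtdist E len v w" by (simp add: rtdist_def ac_simps)
  finally show ?thesis .
qed

lemma rtdist_self: "rtdist E len u u = 0"
  by (simp add: rtdist_def gdist_self)

lemma expdecay_nonneg: "expdecay h \<alpha> d \<ge> 0"
  by (cases d) (auto simp: expdecay_def)

lemma expdecay_le1:
  assumes "h > 0" "\<alpha> \<ge> 0" shows "expdecay h \<alpha> d \<le> 1"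
proof (cases d)
  case (enat k)
  have "- \<alpha> * real k / h \<le> 0" using assms by (simp add: divide_nonpos_pos)
  hence "2 powr (- \<alpha> * real k / h) \<le> 2 powr 0" by (subst powr_le_cancel_iff) simp_all
  then show ?thesis using enat by (simp add: expdecay_def)
qed (simp add: expdecay_def)

lemma expdecay_add: "expdecay h \<alpha> (a + b) = expdecay h \<alpha> a * expdecay h \<alpha> b"
proof (cases a; cases b)
  fix k m assume "a = enat k" "b = enat m"
  moreover have "2 powr (- \<alpha> * real (k + m) / h) = 2 powr (- \<alpha> * real k / h) * 2 powr (- \<alpha> * real m / h)"
    unfolding powr_add[symmetric] by (rule arg_cong[where f="\<lambda>x. 2 powr x"]) (simp add: divide_inverse algebra_simps)
  ultimately show ?thesis by (simp add: expdecay_def)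
qed (auto simp: expdecay_def)

lemma expdecay_anti:
  assumes "h > 0" "\<alpha> \<ge> 0" "a \<le> b" shows "expdecay h \<alpha> b \<le> expdecay h \<alpha> a"
proof (cases a; cases b)
  fix k m assume km: "a = enat k" "b = enat m"
  then have "k \<le> m" using assms by simp
  then have "- \<alpha> * real m / h \<le> - \<alpha> * real k / h"
    using assms by (intro divide_right_mono) (auto intro: mult_left_mono)
  then show ?thesis using km by (simp add: expdecay_def)
qed (use assms in \<open>auto simp: expdecay_def expdecay_nonneg\<close>)

lemma w_nonneg: "expweight V E len h \<alpha> u x \<ge> 0"
  by (auto simp: expweight_def split: enat.split)

lemma w_le_decay:
  "expweight V E len h \<alpha> u x \<le> expdecay h \<alpha> (rtdist E len u x)"
  by (auto simp: expweight_def expdecay_def rtdist_self zero_enat_def split: enat.split)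

lemma w_le1: assumes "h > 0" "\<alpha> \<ge> 0" shows "expweight V E len h \<alpha> u x \<le> 1"
  using w_le_decay[of V E len h \<alpha> u x] expdecay_le1[OF assms] by (meson order_trans)

lemma w_ge:
  assumes "h > 0" "\<alpha> > 0" "card V > 0"
  shows "expweight V E len h \<alpha> u x \<ge> expdecay h \<alpha> (rtdist E len u x) - 1 / real (card V) ^ 2"
proof -
  define n where "n = real (card V)"
  have n: "n > 0" using assms by (simp add: n_def)
  have key: "2 powr (- \<alpha> * real d / h) \<le> 1 / n ^ 2"
    if "\<not> real d \<le> 2 * h * log 2 n / \<alpha>" for d :: nat
  proof -
    have "2 * h * log 2 n / \<alpha> < real d" using that by simp
    hence "2 * h * log 2 n < real d * \<alpha>" using assms by (simp add: divide_less_eq)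
    hence "2 * log 2 n < \<alpha> * real d / h" using assms by (simp add: less_divide_eq mult.commute mult.left_commute)
    hence "- \<alpha> * real d / h \<le> - (2 * log 2 n)" by simp
    hence "2 powr (- \<alpha> * real d / h) \<le> 2 powr (- (2 * log 2 n))" by simp
    also have "2 powr (- (2 * log 2 n)) = 1 / n ^ 2"
    proof -
      have "2 powr (2 * log 2 n) = (2 powr log 2 n) powr 2" by (simp add: powr_powr mult.commute)
      also have "\<dots> = n ^ 2" using n by (simp add: powr_numeral)
      finally show ?thesis by (simp add: powr_minus divide_inverse)
    qed
    finally show ?thesis .
  qed
  show ?thesis
    using key n
    by (auto simp: expweight_def expdecay_def rtdist_self zero_enat_def n_def[symmetric] split: enat.split)
qed

theorem lemma3p11:
  fixes V :: "'a set" and E :: "('a \<times> 'a) set" and len :: "'a \<times> 'a \<Rightarrow> nat"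
    and h \<alpha> :: real and u v w :: 'a
  assumes "finite V" and "E \<subseteq> V \<times> V" and "\<forall>e\<in>E. len e > 0"
    and "h > 0" and "1 \<le> \<alpha>" and "\<alpha> \<le> log 2 (real (card V))"
    and "u \<in> V" and "v \<in> V" and "w \<in> V"
  shows "(\<Sum>a\<in>V. expweight V E len h \<alpha> u a) \<le> real (card V) \<and>
         (\<Sum>a\<in>V. expweight V E len h \<alpha> u a) \<ge> 1 \<and>
         expweight V E len h \<alpha> u v \<ge> expdecay h \<alpha> (rtdist E len u v) - 1 / real (card V) ^ 2 \<and>
         expdecay h \<alpha> (rtdist E len w v) * expweight V E len h \<alpha> u v - 1 / real (card V) ^ 2
           \<le> expweight V E len h \<alpha> u w \<and>
         ereal (expweight V E len h \<alpha> u w)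
           \<le> expgrowth h \<alpha> (rtdist E len w v) * ereal (expweight V E len h \<alpha> u v + 1 / real (card V) ^ 2)"
proof -
  let ?w = "expweight V E len h \<alpha>"
  let ?D = "expdecay h \<alpha>"
  let ?r = "rtdist E len"
  let ?n = "real (card V)"
  have cpos: "card V > 0" using assms(1,7) card_gt_0_iff by blast
  have a0: "\<alpha> > 0" "\<alpha> \<ge> 0" using assms(5) by auto
  have S1: "(\<Sum>a\<in>V. ?w u a) \<le> ?n"
    using sum_mono[of V "?w u" "\<lambda>_. 1"] w_le1[OF assms(4) a0(2), of V E len u] by simp
  have S2: "(\<Sum>a\<in>V. ?w u a) \<ge> 1"
  proof -
    have "?w u u \<le> (\<Sum>a\<in>V. ?w u a)"
      by (intro member_le_sum) (auto simp: w_nonneg assms(1,7))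
    thus ?thesis by (simp add: expweight_def)
  qed
  have G: "\<And>x. ?w u x \<ge> ?D (?r u x) - 1 / ?n ^ 2"
    using w_ge[OF assms(4) a0(1) cpos] by blast
  have P4: "?D (?r w v) * ?w u v - 1 / ?n ^ 2 \<le> ?w u w"
  proof -
    have "?D (?r w v) * ?w u v \<le> ?D (?r w v) * ?D (?r u v)"
      by (intro mult_left_mono w_le_decay expdecay_nonneg)
    also have "\<dots> = ?D (?r u v + ?r v w)" by (simp add: expdecay_add rtdist_sym mult.commute)
    also have "\<dots> \<le> ?D (?r u w)" by (intro expdecay_anti assms(4) a0 rtdist_tri)
    finally show ?thesis using G[of w] by linarith
  qed
  have P5: "ereal (?w u w) \<le> expgrowth h \<alpha> (?r w v) * ereal (?w u v + 1 / ?n ^ 2)"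
  proof (cases "?r w v")
    case infinity
    have "?w u v + 1 / ?n ^ 2 > 0" using w_nonneg[of V E len h \<alpha> u v] cpos by (simp add: add_nonneg_pos)
    then show ?thesis using infinity by (simp add: expgrowth_def)
  next
    case (enat k)
    have "?D (?r u w) * 2 powr (- \<alpha> * real k / h) = ?D (?r u w) * ?D (enat k)"
      by (simp add: expdecay_def)
    also have "\<dots> = ?D (?r u w + ?r w v)" by (simp only: expdecay_add enat)
    also have "\<dots> \<le> ?D (?r u v)" by (intro expdecay_anti assms(4) a0 rtdist_tri)
    also have "\<dots> \<le> ?w u v + 1 / ?n ^ 2" using G[of v] by linarith
    finally have "?D (?r u w) * 2 powr (- \<alpha> * real k / h) * 2 powr (\<alpha> * real k / h)
       \<le> (?w u v + 1 / ?n ^ 2) * 2 powr (\<alpha> * real k / h)" by (simp add: mult_right_mono)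
    also have "?D (?r u w) * 2 powr (- \<alpha> * real k / h) * 2 powr (\<alpha> * real k / h) = ?D (?r u w)"
      by (simp add: mult.assoc powr_add[symmetric])
    finally have "?w u w \<le> 2 powr (\<alpha> * real k / h) * (?w u v + 1 / ?n ^ 2)"
      using w_le_decay[of V E len h \<alpha> u w] by (simp add: mult.commute)
    then show ?thesis using enat by (simp add: expgrowth_def)
  qed
  show ?thesis using S1 S2 G[of v] P4 P5 by blast
qed

end
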